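(* Let $(L,\le,\bot,\top)$ be a complete lattice and $(\&_i,\swarrow^i,\nwarrow_i)$, $i=1,\dots,n$, adjoint triples on $L$ with $x\,\&_i\,\top=\top\,\&_i\,x=x$ for all $x\in L$ and all $i$. Let $(A,B,R,\sigma)$ be a normalized context with concept lattice $\mathcal{M}$, let $\{K_\mu\}_{\mu\in\Lambda}$ be a decomposition of $\mathcal{M}$ into independent blocks, and let $A_\mu,B_\mu$ ($\mu\in\Lambda$) be the associated sets defined below. If $a\in A$, $b\in B$ and $R(a,b)\neq\bot$, then there exists $\mu\in\Lambda$ such that $a\in A_\mu$ and $b\in B_\mu$.
   Context: An adjoint triple on $L$ is a triple of maps $\&,\swarrow,\nwarrow\colon L\times L\to L$ with $x\le z\swarrow y\iff x\& y\le z\iff y\le z\nwarrow x$. A context is $(A,B,R,\sigma)$ with $A,B$ non-empty, $R\colon A\times B\to L$, $\sigma\colon A\times B\to\{1,\dots,n\}$; normalized means every $a\in A$ has $b_1,b_2$ with $R(a,b_1)\ne\bot$, $R(a,b_2)=\bot$, and every $b\in B$ has $a_1,a_2$ with $R(a_1,b)\ne\bot$, $R(a_2,b)=\bot$. For $g\colon B\to L$, $f\colon A\to L$: $g^\uparrow(a)=\inf_{b}R(a,b)\swarrow^{\sigma(a,b)}g(b)$, $f^\downarrow(b)=\inf_{a}R(a,b)\nwarrow_{\sigma(a,b)}f(a)$. $\mathcal{M}$ is the complete lattice of pairs $\langle g,f\rangle$ with $g^\uparrow=f$, $f^\downarrow=g$, ordered by $g_1\le g_2$ pointwise; top $\langle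 g_\top,f_\bot\rangle$, bottom $\langle g_\bot,f_\top\rangle$ ($g_\top,g_\bot,f_\top,f_\bot$ constant maps). $\phi_{a,x}\colon A\to L$ takes value $x$ at $a$ and $\bot$ elsewhere; $\phi_{b,y}\colon B\to L$ takes value $y$ at $b$ and $\bot$ elsewhere. For a bounded lattice $(M,\preceq,\bot,\top)$, a block is a sublattice $K\subsetneq M$ with $K\setminus\{\bot,\top\}\ne\varnothing$ and $(\{x\mid k\preceq x\}\cup\{x\mid x\preceq k\})\setminus\{\bot,\top\}\subseteq K$ for all $k\in K\setminus\{\bot,\top\}$; blocks $K_1,K_2$ are independent if $K_1\cap K_2\subseteq\{\bot,\top\}$; a decomposition into independent blocks is a family of pairwise independent blocks whose union is $M$. With $K_\mu^*=K_\mu\setminus\{\langle g_\top,f_\bot\rangle,\langle g_\bot,f_\top\rangle\}$: $A_\mu=\{a\in A\mid\langle\phi_{a,x}^\downarrow,\phi_{a,x}^{\downarrow\uparrow}\rangle\in K_\mu^*\text{ for some }x\in L\}$ and $B_\mu=\{b\in B\mid\langle\phi_{b,y}^{\uparrow\downarrow},\phi_{b,y}^{\uparrow}\rangle\in K_\mu^*\text{ for some }y\in L\}$. *)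

theory Defs
  imports Main
begin

definition adjoint_triple ::
  "('l::order \<Rightarrow> 'l \<Rightarrow> 'l) \<Rightarrow> ('l \<Rightarrow> 'l \<Rightarrow> 'l) \<Rightarrow> ('l \<Rightarrow> 'l \<Rightarrow> 'l) \<Rightarrow> bool" where
  "adjoint_triple amp sw nw \<longleftrightarrow>
     (\<forall>x y z. (x \<le> sw z y \<longleftrightarrow> amp x y \<le> z) \<and> (amp x y \<le> z \<longleftrightarrow> y \<le> nw z x))"

definition normalized_context ::
  "nat \<Rightarrow> 'a set \<Rightarrow> 'b set \<Rightarrow> ('a \<Rightarrow> 'b \<Rightarrow> 'l::complete_lattice) \<Rightarrow> ('a \<Rightarrow> 'b \<Rightarrow> nat) \<Rightarrow> bool" where
  "normalized_context n A B R \<sigma> \<longleftrightarrow>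
     A \<noteq> {} \<and> B \<noteq> {} \<and>
     (\<forall>a\<in>A. \<forall>b\<in>B. \<sigma> a b \<in> {1..n}) \<and>
     (\<forall>a\<in>A. (\<exists>b1\<in>B. R a b1 \<noteq> bot) \<and> (\<exists>b2\<in>B. R a b2 = bot)) \<and>
     (\<forall>b\<in>B. (\<exists>a1\<in>A. R a1 b \<noteq> bot) \<and> (\<exists>a2\<in>A. R a2 b = bot))"

text \<open>Maps B \<rightarrow> L and A \<rightarrow> L are represented as total
  functions; the operators return bot outside the carrier, so that all
  results are extensional (and equality of concepts is equality on the carriers).\<close>
definition up_op ::
  "(nat \<Rightarrow> 'l::complete_lattice \<Rightarrow> 'l \<Rightarrow> 'l) \<Rightarrow> 'a set \<Rightarrow> 'b set \<Rightarrow> ('a \<Rightarrow> 'b \<Rightarrow> 'l)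
     \<Rightarrow> ('a \<Rightarrow> 'b \<Rightarrow> nat) \<Rightarrow> ('b \<Rightarrow> 'l) \<Rightarrow> ('a \<Rightarrow> 'l)" where
  "up_op sw A B R \<sigma> g = (\<lambda>a. if a \<in> A then (INF b\<in>B. sw (\<sigma> a b) (R a b) (g b)) else bot)"

definition down_op ::
  "(nat \<Rightarrow> 'l::complete_lattice \<Rightarrow> 'l \<Rightarrow> 'l) \<Rightarrow> 'a set \<Rightarrow> 'b set \<Rightarrow> ('a \<Rightarrow> 'b \<Rightarrow> 'l)
     \<Rightarrow> ('a \<Rightarrow> 'b \<Rightarrow> nat) \<Rightarrow> ('a \<Rightarrow> 'l) \<Rightarrow> ('b \<Rightarrow> 'l)" where
  "down_op nw A B R \<sigma> f = (\<lambda>b. if b \<in> B then (INF a\<in>A. nw (\<sigma> a b) (R a b) (f a)) else bot)"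

definition concepts where
  "concepts sw nw A B R \<sigma> =
     {(g, f). up_op sw A B R \<sigma> g = f \<and> down_op nw A B R \<sigma> f = g}"

definition concept_le :: "'b set \<Rightarrow> ('b \<Rightarrow> 'l::order) \<times> ('a \<Rightarrow> 'l) \<Rightarrow> ('b \<Rightarrow> 'l) \<times> ('a \<Rightarrow> 'l) \<Rightarrow> bool" where
  "concept_le B c1 c2 \<longleftrightarrow> (\<forall>b\<in>B. fst c1 b \<le> fst c2 b)"

definition top_concept :: "'a set \<Rightarrow> 'b set \<Rightarrow> ('b \<Rightarrow> 'l::complete_lattice) \<times> ('a \<Rightarrow> 'l)" where
  "top_concept A B = ((\<lambda>b. if b \<in> B then top else bot), (\<lambda>a. bot))"

definition bot_concept :: "'a set \<Rightarrow> 'b set \<Rightarrow> ('b \<Rightarrow> 'l::complete_lattice) \<times> ('a \<Rightarrow> 'l)" where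
  "bot_concept A B = ((\<lambda>b. bot), (\<lambda>a. if a \<in> A then top else bot))"

definition is_join :: "'c set \<Rightarrow> ('c \<Rightarrow> 'c \<Rightarrow> bool) \<Rightarrow> 'c \<Rightarrow> 'c \<Rightarrow> 'c \<Rightarrow> bool" where
  "is_join M le x y z \<longleftrightarrow> z \<in> M \<and> le x z \<and> le y z \<and> (\<forall>w\<in>M. le x w \<and> le y w \<longrightarrow> le z w)"

definition is_meet :: "'c set \<Rightarrow> ('c \<Rightarrow> 'c \<Rightarrow> bool) \<Rightarrow> 'c \<Rightarrow> 'c \<Rightarrow> 'c \<Rightarrow> bool" where
  "is_meet M le x y z \<longleftrightarrow> z \<in> M \<and> le z x \<and> le z y \<and> (\<forall>w\<in>M. le w x \<and> le w y \<longrightarrow> le w z)"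

definition sublattice :: "'c set \<Rightarrow> ('c \<Rightarrow> 'c \<Rightarrow> bool) \<Rightarrow> 'c set \<Rightarrow> bool" where
  "sublattice M le K \<longleftrightarrow> K \<subseteq> M \<and>
     (\<forall>x\<in>K. \<forall>y\<in>K. \<forall>z. (is_join M le x y z \<longrightarrow> z \<in> K) \<and> (is_meet M le x y z \<longrightarrow> z \<in> K))"

definition is_block :: "'c set \<Rightarrow> ('c \<Rightarrow> 'c \<Rightarrow> bool) \<Rightarrow> 'c \<Rightarrow> 'c \<Rightarrow> 'c set \<Rightarrow> bool" where
  "is_block M le bt tp K \<longleftrightarrow>
     sublattice M le K \<and> K \<subset> M \<and> K - {bt, tp} \<noteq> {} \<and>
     (\<forall>k \<in> K - {bt, tp}. ({x\<in>M. le k x} \<union> {x\<in>M. le x k}) - {bt, tp} \<subseteq> K)"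

definition independent_blocks :: "'c \<Rightarrow> 'c \<Rightarrow> 'c set \<Rightarrow> 'c set \<Rightarrow> bool" where
  "independent_blocks bt tp K1 K2 \<longleftrightarrow> K1 \<inter> K2 \<subseteq> {bt, tp}"

definition block_decomposition ::
  "'c set \<Rightarrow> ('c \<Rightarrow> 'c \<Rightarrow> bool) \<Rightarrow> 'c \<Rightarrow> 'c \<Rightarrow> 'i set \<Rightarrow> ('i \<Rightarrow> 'c set) \<Rightarrow> bool" where
  "block_decomposition M le bt tp \<Lambda> K \<longleftrightarrow>
     (\<forall>\<mu>\<in>\<Lambda>. is_block M le bt tp (K \<mu>)) \<and>
     (\<forall>\<mu>\<in>\<Lambda>. \<forall>\<nu>\<in>\<Lambda>. \<mu> \<noteq> \<nu> \<longrightarrow> independent_blocks bt tp (K \<mu>) (K \<nu>)) \<and>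
     (\<Union>\<mu>\<in>\<Lambda>. K \<mu>) = M"

definition phi :: "'x \<Rightarrow> 'l::complete_lattice \<Rightarrow> 'x \<Rightarrow> 'l" where
  "phi u v = (\<lambda>u'. if u' = u then v else bot)"

definition A_block where
  "A_block sw nw A B R \<sigma> Kmu =
     {a\<in>A. \<exists>x. (down_op nw A B R \<sigma> (phi a x), up_op sw A B R \<sigma> (down_op nw A B R \<sigma> (phi a x)))
               \<in> Kmu - {top_concept A B, bot_concept A B}}"

definition B_block where
  "B_block sw nw A B R \<sigma> Kmu =
     {b\<in>B. \<exists>y. (down_op nw A B R \<sigma> (up_op sw A B R \<sigma> (phi b y)), up_op sw A B R \<sigma> (phi b y))
               \<in> Kmu - {top_concept A B, bot_concept A B}}"

end

theory Submission
  imports Defs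
begin

lemma at_sw: "adjoint_triple am s w \<Longrightarrow> x \<le> s z y \<longleftrightarrow> am x y \<le> z"
  unfolding adjoint_triple_def by blast
lemma at_nw: "adjoint_triple am s w \<Longrightarrow> y \<le> w z x \<longleftrightarrow> am x y \<le> z"
  unfolding adjoint_triple_def by blast
lemma at_bot_l: "adjoint_triple am s w \<Longrightarrow> am (bot::'l::complete_lattice) y = bot"
  by (metis at_sw bot.extremum bot.extremum_uniqueI)
lemma at_bot_r: "adjoint_triple am s w \<Longrightarrow> am x (bot::'l::complete_lattice) = bot"
  by (metis at_nw bot.extremum bot.extremum_uniqueI)

definition GCond where
  "GCond sw nw A B R \<sigma> \<longleftrightarrow> (\<forall>a\<in>A. \<forall>b\<in>B. \<forall>x y. x \<le> sw (\<sigma> a b) (R a b) y \<longleftrightarrow> y \<le> nw (\<sigma> a b) (R a b) x)"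

lemma gc_equiv:
  assumes "GCond sw nw A B R \<sigma>"
  shows "(\<forall>a\<in>A. f a \<le> up_op sw A B R \<sigma> g a) \<longleftrightarrow> (\<forall>b\<in>B. g b \<le> down_op nw A B R \<sigma> f b)"
  using assms unfolding GCond_def up_op_def down_op_def by (auto simp: le_INF_iff)

lemma ext_down:
  assumes "GCond sw nw A B R \<sigma>" "b \<in> B"
  shows "g b \<le> down_op nw A B R \<sigma> (up_op sw A B R \<sigma> g) b"
  using gc_equiv[OF assms(1), of "up_op sw A B R \<sigma> g" g] assms(2) by blast

lemma ext_up:
  assumes "GCond sw nw A B R \<sigma>" "a \<in> A"
  shows "f a \<le> up_op sw A B R \<sigma> (down_op nw A B R \<sigma> f) a"
  using gc_equiv[OF assms(1), of f "down_op nw A B R \<sigma> f"] assms(2) by blast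

lemma anti_up:
  assumes "GCond sw nw A B R \<sigma>" "\<forall>b\<in>B. g b \<le> g' b" "a \<in> A"
  shows "up_op sw A B R \<sigma> g' a \<le> up_op sw A B R \<sigma> g a"
proof -
  have "\<forall>b\<in>B. g b \<le> down_op nw A B R \<sigma> (up_op sw A B R \<sigma> g') b"
    using assms(2) ext_down[OF assms(1)] order_trans by blast
  then show ?thesis using gc_equiv[OF assms(1)] assms(3) by blast
qed

lemma anti_down:
  assumes "GCond sw nw A B R \<sigma>" "\<forall>a\<in>A. f a \<le> f' a" "b \<in> B"
  shows "down_op nw A B R \<sigma> f' b \<le> down_op nw A B R \<sigma> f b"
proof -
  have "\<forall>a\<in>A. f a \<le> up_op sw A B R \<sigma> (down_op nw A B R \<sigma> f') a"
    using assms(2) ext_up[OF assms(1)] order_trans by blast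
  then show ?thesis using gc_equiv[OF assms(1)] assms(3) by blast
qed

lemma close_up:
  assumes "GCond sw nw A B R \<sigma>"
  shows "up_op sw A B R \<sigma> (down_op nw A B R \<sigma> (up_op sw A B R \<sigma> g)) = up_op sw A B R \<sigma> g"
proof
  fix a
  show "up_op sw A B R \<sigma> (down_op nw A B R \<sigma> (up_op sw A B R \<sigma> g)) a = up_op sw A B R \<sigma> g a"
  proof (cases "a \<in> A")
    case True
    show ?thesis
      by (rule antisym, rule anti_up[OF assms _ True], use ext_down[OF assms] in blast,
          rule ext_up[OF assms True])
  next
    case False
    then show ?thesis by (simp add: up_op_def)
  qed
qed

lemma close_down:
  assumes "GCond sw nw A B R \<sigma>"
  shows "down_op nw A B R \<sigma> (up_op sw A B R \<sigma> (down_op nw A B R \<sigma> f)) = down_op nw A B R \<sigma> f"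
proof
  fix b
  show "down_op nw A B R \<sigma> (up_op sw A B R \<sigma> (down_op nw A B R \<sigma> f)) b = down_op nw A B R \<sigma> f b"
  proof (cases "b \<in> B")
    case True
    show ?thesis
      by (rule antisym, rule anti_down[OF assms _ True], use ext_up[OF assms] in blast,
          rule ext_down[OF assms True])
  next
    case False
    then show ?thesis by (simp add: down_op_def)
  qed
qed

theorem lemma34:
  fixes amp sw nw :: "nat \<Rightarrow> 'l::complete_lattice \<Rightarrow> 'l \<Rightarrow> 'l"
    and n :: nat
    and A :: "'a set" and B :: "'b set"
    and R :: "'a \<Rightarrow> 'b \<Rightarrow> 'l" and \<sigma> :: "'a \<Rightarrow> 'b \<Rightarrow> nat"
    and \<Lambda> :: "'i set" and K :: "'i \<Rightarrow> (('b \<Rightarrow> 'l) \<times> ('a \<Rightarrow> 'l)) set"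
    and a :: 'a and b :: 'b
  assumes adj: "\<forall>i\<in>{1..n}. adjoint_triple (amp i) (sw i) (nw i)"
    and unit: "\<forall>i\<in>{1..n}. \<forall>x. amp i x top = x \<and> amp i top x = x"
    and ctx: "normalized_context n A B R \<sigma>"
    and dec: "block_decomposition (concepts sw nw A B R \<sigma>) (concept_le B)
                (bot_concept A B) (top_concept A B) \<Lambda> K"
    and a: "a \<in> A" and b: "b \<in> B" and Rab: "R a b \<noteq> bot"
  shows "\<exists>\<mu>\<in>\<Lambda>. a \<in> A_block sw nw A B R \<sigma> (K \<mu>) \<and> b \<in> B_block sw nw A B R \<sigma> (K \<mu>)"
proof -
  have sig: "\<And>a' b'. a' \<in> A \<Longrightarrow> b' \<in> B \<Longrightarrow> \<sigma> a' b' \<in> {1..n}"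
    using ctx unfolding normalized_context_def by blast
  have AT: "\<And>a' b'. a' \<in> A \<Longrightarrow> b' \<in> B \<Longrightarrow> adjoint_triple (amp (\<sigma> a' b')) (sw (\<sigma> a' b')) (nw (\<sigma> a' b'))"
    using adj sig by blast
  have UN: "\<And>a' b' x. a' \<in> A \<Longrightarrow> b' \<in> B \<Longrightarrow> amp (\<sigma> a' b') x top = x \<and> amp (\<sigma> a' b') top x = x"
    using unit sig by blast
  have GC: "GCond sw nw A B R \<sigma>"
    unfolding GCond_def using AT at_sw at_nw by metis
  have tb: "(top::'l) \<noteq> bot" using Rab by (metis bot.extremum_uniqueI top_greatest)
  obtain b2 where b2: "b2 \<in> B" and b2R: "R a b2 = bot" using ctx a unfolding normalized_context_def by blast
  define g1 where "g1 = down_op nw A B R \<sigma> (phi a top)"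
  define f1 where "f1 = up_op sw A B R \<sigma> g1"
  define f2 where "f2 = up_op sw A B R \<sigma> (phi b (R a b))"
  define g2 where "g2 = down_op nw A B R \<sigma> f2"
  let ?M = "concepts sw nw A B R \<sigma>"
  have C1M: "(g1, f1) \<in> ?M" unfolding concepts_def f1_def g1_def using close_down[OF GC] by simp
  have C2M: "(g2, f2) \<in> ?M" unfolding concepts_def f2_def g2_def using close_up[OF GC] by simp
  have g1ge: "R a b' \<le> g1 b'" if "b' \<in> B" for b'
  proof -
    have "R a b' \<le> nw (\<sigma> a' b') (R a' b') (phi a top a')" if "a' \<in> A" for a'
    proof (cases "a' = a")
      case True
      then show ?thesis using AT[OF that \<open>b' \<in> B\<close>] UN[OF that \<open>b' \<in> B\<close>] by (simp add: phi_def at_nw)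
    next
      case False
      then show ?thesis using AT[OF that \<open>b' \<in> B\<close>] by (simp add: phi_def at_nw at_bot_l)
    qed
    then show ?thesis using that unfolding g1_def down_op_def by (simp add: le_INF_iff)
  qed
  have g1le: "g1 b2 \<le> R a b2"
  proof -
    have "g1 b2 \<le> nw (\<sigma> a b2) (R a b2) (phi a top a)"
      unfolding g1_def down_op_def using b2(1) a by simp (metis (no_types, lifting) INF_lower)
    also have "\<dots> \<le> R a b2"
    proof -
      have "amp (\<sigma> a b2) top (nw (\<sigma> a b2) (R a b2) top) \<le> R a b2"
        using at_nw[OF AT[OF a b2(1)]] by blast
      then show ?thesis using UN[OF a b2(1)] by (simp add: phi_def)
    qed
    finally show ?thesis .
  qed
  have f2a: "f2 a = top"
  proof -
    have "top \<le> sw (\<sigma> a b') (R a b') (phi b (R a b) b')" if "b' \<in> B" for b'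
    proof (cases "b' = b")
      case True
      then show ?thesis using AT[OF a that] UN[OF a that] by (simp add: phi_def at_sw)
    next
      case False
      then show ?thesis using AT[OF a that] by (simp add: phi_def at_sw at_bot_r)
    qed
    then show ?thesis unfolding f2_def up_op_def using a by (simp add: le_INF_iff top_unique)
  qed
  have g2b: "R a b \<le> g2 b"
    using ext_down[OF GC b, of "phi b (R a b)"] unfolding g2_def f2_def by (simp add: phi_def)
  have le21: "concept_le B (g2, f2) (g1, f1)"
    unfolding concept_le_def
  proof (intro ballI, simp)
    fix b' assume b': "b' \<in> B"
    have "g2 b' \<le> nw (\<sigma> a b') (R a b') (f2 a)"
      unfolding g2_def down_op_def using b' a by simp (metis (no_types, lifting) INF_lower)
    also have "\<dots> \<le> R a b'"
    proof -
      have "amp (\<sigma> a b') top (nw (\<sigma> a b') (R a b') top) \<le> R a b'"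
        using at_nw[OF AT[OF a b']] by blast
      then show ?thesis using UN[OF a b'] f2a by simp
    qed
    also have "\<dots> \<le> g1 b'" using g1ge b' .
    finally show "g2 b' \<le> g1 b'" .
  qed
  have C1nt: "(g1, f1) \<notin> {bot_concept A B, top_concept A B}"
  proof -
    have "g1 b \<noteq> bot" using g1ge[OF b] Rab bot_unique by metis
    moreover have "g1 b2 \<noteq> top" using g1le b2R tb by (metis bot_unique)
    ultimately show ?thesis unfolding bot_concept_def top_concept_def using b2 by (auto dest: fun_cong)
  qed
  have C2nt: "(g2, f2) \<notin> {bot_concept A B, top_concept A B}"
  proof -
    have "g2 b \<noteq> bot" using g2b Rab bot_unique by metis
    then show ?thesis unfolding bot_concept_def top_concept_def using f2a tb by (auto dest: fun_cong)
  qed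
  obtain \<mu> where mu: "\<mu> \<in> \<Lambda>" "(g1, f1) \<in> K \<mu>"
    using dec C1M unfolding block_decomposition_def by blast
  have blk: "is_block ?M (concept_le B) (bot_concept A B) (top_concept A B) (K \<mu>)"
    using dec mu unfolding block_decomposition_def by blast
  have "(g2, f2) \<in> K \<mu>"
    using blk mu(2) C1nt C2nt C2M le21 unfolding is_block_def by blast
  then have "a \<in> A_block sw nw A B R \<sigma> (K \<mu>)"
    unfolding A_block_def using a mu(2) C1nt g1_def f1_def
    by (auto simp: insert_commute intro!: exI[of _ top])
  moreover have "b \<in> B_block sw nw A B R \<sigma> (K \<mu>)"
    unfolding B_block_def using b \<open>(g2, f2) \<in> K \<mu>\<close> C2nt g2_def f2_def
    by (auto intro!: exI[of _ "R a b"])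
  ultimately show ?thesis using mu(1) by blast
qed

end
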